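(* Let $f:\mathbb{R}^n\to\mathbb{R}^n$ be locally Lipschitz, and let $V_1,V_2\in C^1(\mathbb{R}^n)$, continuous $N_1,N_2:\mathbb{R}^n\to[0,\infty)$, and continuous $h:[0,\infty)\to[0,\infty)$ with $h(0)=0$ and $\sup_{r>0}h(r)/r<\infty$ satisfy $\nabla V_1\cdot f\le -N_1$ and $\nabla V_2\cdot f\le -N_2+h(N_1)$ on $\mathbb{R}^n$. Assume every solution is defined and bounded on $[0,\infty)$ and that along every solution the maps $t\mapsto N_i(x(t))$ are uniformly continuous. Suppose $E:=\{x:N_1(x)=0,\ N_2(x)=0\}$ coincides with the equilibrium set $E_f:=\{x:f(x)=0\}$, and every equilibrium is Lyapunov stable. Then every solution converges to a single equilibrium in $E$ (its $\omega$-limit set is a singleton in $E$), and each equilibrium is semistable.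
   Context: A point $z$ is Lyapunov stable if for every neighborhood $U$ of $z$ there is a neighborhood $V\subset U$ of $z$ such that every solution starting in $V$ remains in $U$ for all $t\ge0$. An equilibrium $\bar x\in E_f$ is semistable if it is Lyapunov stable and there exists $\delta>0$ such that every solution with $\|x(0)-\bar x\|\le\delta$ converges to some (possibly different) Lyapunov stable equilibrium in $E_f$. *)

theory Defs
  imports "HOL-Analysis.Analysis"
begin

definition is_solution :: "(real^'n \<Rightarrow> real^'n) \<Rightarrow> (real \<Rightarrow> real^'n) \<Rightarrow> bool" where
  "is_solution f x \<longleftrightarrow>
     (\<forall>t\<ge>0. (x has_vector_derivative f (x t)) (at t within {0..}))"

definition equilibria :: "(real^'n \<Rightarrow> real^'n) \<Rightarrow> (real^'n) set" where
  "equilibria f = {z. f z = 0}"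

definition lyapunov_stable :: "(real^'n \<Rightarrow> real^'n) \<Rightarrow> real^'n \<Rightarrow> bool" where
  "lyapunov_stable f z \<longleftrightarrow>
     (\<forall>U. open U \<and> z \<in> U \<longrightarrow>
        (\<exists>V. open V \<and> z \<in> V \<and> V \<subseteq> U \<and>
           (\<forall>x. is_solution f x \<and> x 0 \<in> V \<longrightarrow> (\<forall>t\<ge>0. x t \<in> U))))"

definition semistable :: "(real^'n \<Rightarrow> real^'n) \<Rightarrow> real^'n \<Rightarrow> bool" where
  "semistable f z \<longleftrightarrow> z \<in> equilibria f \<and> lyapunov_stable f z \<and>
     (\<exists>\<delta>>0. \<forall>x. is_solution f x \<and> norm (x 0 - z) \<le> \<delta> \<longrightarrow>
        (\<exists>e \<in> equilibria f. lyapunov_stable f e \<and> (x \<longlongrightarrow> e) at_top))"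

definition omega_limit :: "(real \<Rightarrow> real^'n) \<Rightarrow> (real^'n) set" where
  "omega_limit x = {p. \<exists>s::nat \<Rightarrow> real. filterlim s at_top sequentially \<and> (\<forall>k. s k \<ge> 0) \<and>
                        (\<lambda>k. x (s k)) \<longlonglongrightarrow> p}"

end

theory Submission
  imports Defs
begin

lemma barbalat:
  fixes g M g' :: "real \<Rightarrow> real"
  assumes d: "\<And>t. t \<ge> 0 \<Longrightarrow> (g has_derivative (\<lambda>h. h * g' t)) (at t within {0..})"
    and le: "\<And>t. t \<ge> 0 \<Longrightarrow> g' t \<le> - M t"
    and nn: "\<And>t. t \<ge> 0 \<Longrightarrow> M t \<ge> 0"
    and uc: "uniformly_continuous_on {0..} M"
    and lb: "\<And>t. t \<ge> 0 \<Longrightarrow> B \<le> g t"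
  shows "(M \<longlongrightarrow> 0) at_top"
proof -
  have mvt: "\<exists>\<xi>\<in>{a..b}. g b - g a \<le> -(b-a) * M \<xi>" if "0 \<le> a" "a \<le> b" for a b
  proof -
    have "\<exists>\<xi>\<in>{a..b}. g b - g a = (b - a) * g' \<xi>"
      apply (rule mvt_very_simple[of a b g "\<lambda>t h. h * g' t", simplified])
      using that apply simp
      apply (rule has_derivative_subset[OF d])
      using that by auto
    then obtain \<xi> where \<xi>: "\<xi> \<in> {a..b}" "g b - g a = (b - a) * g' \<xi>" by blast
    have "(b - a) * g' \<xi> \<le> (b-a) * (- M \<xi>)"
      apply (rule mult_left_mono) using le[of \<xi>] \<xi> that by auto
    then have "g b - g a \<le> -(b-a) * M \<xi>" using \<xi> by (simp add: algebra_simps)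
    then show ?thesis using \<xi>(1) by blast
  qed
  have mono: "g b \<le> g a" if ab: "0 \<le> a" "a \<le> b" for a b
  proof -
    obtain \<xi> where "\<xi>\<in>{a..b}" "g b - g a \<le> -(b-a) * M \<xi>" using mvt[OF ab] by blast
    moreover have "(b-a) * M \<xi> \<ge> 0" using nn[of \<xi>] ab \<open>\<xi>\<in>{a..b}\<close> by auto
    ultimately show ?thesis by linarith
  qed
  show ?thesis
    unfolding tendsto_iff
  proof (intro allI impI)
    fix \<epsilon> :: real assume ep: "\<epsilon> > 0"
    obtain dd where dd: "dd > 0" "\<forall>x\<in>{0..}. \<forall>x'\<in>{0..}. dist x' x < dd \<longrightarrow> dist (M x') (M x) < \<epsilon>/2"
      using uc ep unfolding uniformly_continuous_on_def by (meson half_gt_zero)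
    define L where "L = Inf (g ` {0..})"
    have bdd: "bdd_below (g ` {0..})" using lb by (auto intro!: bdd_belowI)
    have "L < L + dd/2 * (\<epsilon>/2)" using dd ep by simp
    then obtain T where T: "T \<ge> 0" "g T < L + dd/2 * (\<epsilon>/2)"
      using cInf_lessD[of "g ` {0..}"] unfolding L_def by fastforce
    have "dist (M t) 0 < \<epsilon>" if t: "t \<ge> T" for t
    proof (rule ccontr)
      assume "\<not> dist (M t) 0 < \<epsilon>"
      hence Mt: "M t \<ge> \<epsilon>" using nn[of t] T t by auto
      obtain \<xi> where \<xi>: "\<xi>\<in>{t..t+dd/2}" "g (t+dd/2) - g t \<le> -(dd/2) * M \<xi>"
        using mvt[of t "t+dd/2"] T t dd by auto
      have "dist \<xi> t < dd" using \<xi> dd by (auto simp: dist_real_def)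
      hence "dist (M \<xi>) (M t) < \<epsilon>/2" using dd(2) \<xi> T t by auto
      hence "M \<xi> \<ge> \<epsilon>/2" using Mt unfolding dist_real_def by linarith
      hence "(dd/2) * M \<xi> \<ge> (dd/2) * (\<epsilon>/2)" using dd by (intro mult_left_mono) auto
      moreover have "g t \<le> g T" using mono T t by auto
      moreover have "L \<le> g (t+dd/2)" unfolding L_def
        using bdd T t dd by (intro cInf_lower) auto
      ultimately show False using \<xi> T by linarith
    qed
    then show "\<forall>\<^sub>F t in at_top. dist (M t) 0 < \<epsilon>"
      unfolding eventually_at_top_linorder by blast
  qed
qed

lemma shift_sol:
  assumes "is_solution f x" "s \<ge> 0"
  shows "is_solution f (\<lambda>t. x (t + s))"
  unfolding is_solution_def
proof (intro allI impI)
  fix t :: real assume t: "t \<ge> 0"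
  have 1: "((\<lambda>t. t + s) has_vector_derivative 1) (at t within {0..})"
    by (auto intro!: derivative_eq_intros)
  have 2: "(x has_vector_derivative f (x (t + s))) (at (t + s) within (\<lambda>t. t + s) ` {0..})"
    apply (rule has_vector_derivative_within_subset[of _ _ _ "{0..}"])
    using assms t unfolding is_solution_def by auto
  show "((\<lambda>t. x (t + s)) has_vector_derivative f (x (t + s))) (at t within {0..})"
    using vector_diff_chain_within[OF 1 2] by (simp add: o_def)
qed

lemma chain_V:
  assumes "is_solution f x" "\<And>z. (V has_derivative (\<lambda>v. DV z \<bullet> v)) (at z)" "t \<ge> 0"
  shows "((\<lambda>t. V (x t)) has_derivative (\<lambda>h. h * (DV (x t) \<bullet> f (x t)))) (at t within {0..})"
proof -
  have 1: "(x has_derivative (\<lambda>h. h *\<^sub>R f (x t))) (at t within {0..})"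
    using assms(1,3) unfolding is_solution_def has_vector_derivative_def by auto
  have 2: "(V has_derivative (\<lambda>v. DV (x t) \<bullet> v)) (at (x t) within x ` {0..})"
    using assms(2) by (rule has_derivative_at_withinI)
  show ?thesis using diff_chain_within[OF 1 2] by (simp add: o_def mult.commute)
qed

theorem corollary2p7:
  fixes f :: "real^'n \<Rightarrow> real^'n"
    and V1 V2 :: "real^'n \<Rightarrow> real"
    and DV1 DV2 :: "real^'n \<Rightarrow> real^'n"
    and N1 N2 :: "real^'n \<Rightarrow> real"
    and h :: "real \<Rightarrow> real"
  assumes f_loclip: "local_lipschitz (UNIV::real set) UNIV (\<lambda>_. f)"
    and V1_deriv: "\<And>z. (V1 has_derivative (\<lambda>v. DV1 z \<bullet> v)) (at z)"
    and V1_C1: "continuous_on UNIV DV1"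
    and V2_deriv: "\<And>z. (V2 has_derivative (\<lambda>v. DV2 z \<bullet> v)) (at z)"
    and V2_C1: "continuous_on UNIV DV2"
    and N1_cont: "continuous_on UNIV N1" and N1_nonneg: "\<And>z. N1 z \<ge> 0"
    and N2_cont: "continuous_on UNIV N2" and N2_nonneg: "\<And>z. N2 z \<ge> 0"
    and h_cont: "continuous_on {0..} h" and h_nonneg: "\<And>r. r \<ge> 0 \<Longrightarrow> h r \<ge> 0"
    and h_zero: "h 0 = 0"
    and h_lin: "bdd_above ((\<lambda>r. h r / r) ` {0<..})"
    and dV1: "\<And>z. DV1 z \<bullet> f z \<le> - N1 z"
    and dV2: "\<And>z. DV2 z \<bullet> f z \<le> - N2 z + h (N1 z)"
    and complete: "\<And>x0. \<exists>x. is_solution f x \<and> x 0 = x0"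
    and bounded_sol: "\<And>x. is_solution f x \<Longrightarrow> bounded (x ` {0..})"
    and unif1: "\<And>x. is_solution f x \<Longrightarrow> uniformly_continuous_on {0..} (\<lambda>t. N1 (x t))"
    and unif2: "\<And>x. is_solution f x \<Longrightarrow> uniformly_continuous_on {0..} (\<lambda>t. N2 (x t))"
    and E_eq: "{z. N1 z = 0 \<and> N2 z = 0} = equilibria f"
    and all_stable: "\<And>z. z \<in> equilibria f \<Longrightarrow> lyapunov_stable f z"
  shows "(\<forall>x. is_solution f x \<longrightarrow>
            (\<exists>e \<in> {z. N1 z = 0 \<and> N2 z = 0}. (x \<longlongrightarrow> e) at_top \<and> omega_limit x = {e}))
         \<and> (\<forall>z \<in> equilibria f. semistable f z)"
proof -
  obtain C where C: "\<And>r. r > 0 \<Longrightarrow> h r / r \<le> C"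
    using h_lin unfolding bdd_above_def by auto
  define c where "c = max C 0"
  have hc: "h r \<le> c * r" if "r \<ge> 0" for r
  proof (cases "r = 0")
    case True then show ?thesis using h_zero by simp
  next
    case False
    then have "r > 0" using that by simp
    then have "h r / r \<le> c" using C[of r] unfolding c_def by auto
    then show ?thesis using \<open>r > 0\<close> by (simp add: divide_le_eq mult.commute)
  qed
  have c0: "c \<ge> 0" unfolding c_def by simp
  have contV: "continuous_on UNIV V" if "\<And>z. (V has_derivative (\<lambda>v. DV z \<bullet> v)) (at z)" for V :: "real^'n \<Rightarrow> real" and DV
    using that has_derivative_continuous continuous_at_imp_continuous_on by blast
  have lbV: "\<exists>B. \<forall>t\<ge>0. B \<le> V (x t)" if "continuous_on UNIV V" "is_solution f x" for V :: "real^'n \<Rightarrow> real" and x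
  proof -
    have "compact (closure (x ` {0..}))" using bounded_sol[OF that(2)] compact_closure by blast
    then have "compact (V ` closure (x ` {0..}))"
      using that(1) by (intro compact_continuous_image) (auto intro: continuous_on_subset)
    then have "bounded (V ` closure (x ` {0..}))" by (rule compact_imp_bounded)
    then obtain a where "\<forall>y\<in>V ` closure (x ` {0..}). \<bar>y\<bar> \<le> a" unfolding bounded_real by blast
    then have "\<forall>t\<ge>0. -a \<le> V (x t)"
    proof (intro allI impI)
      fix t :: real assume "t \<ge> 0"
      then have "x t \<in> closure (x ` {0..})" using closure_subset by fastforce
      then have "\<bar>V (x t)\<bar> \<le> a" using \<open>\<forall>y\<in>V ` closure (x ` {0..}). \<bar>y\<bar> \<le> a\<close> by blast
      then show "-a \<le> V (x t)" by linarith
    qed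
    then show ?thesis by blast
  qed
  have conv: "\<exists>e \<in> {z. N1 z = 0 \<and> N2 z = 0}. (x \<longlongrightarrow> e) at_top \<and> omega_limit x = {e}"
    if sol: "is_solution f x" for x
  proof -
    obtain B1 where B1: "\<forall>t\<ge>0. B1 \<le> V1 (x t)" using lbV[OF contV[OF V1_deriv] sol] by blast
    have N1lim: "((\<lambda>t. N1 (x t)) \<longlongrightarrow> 0) at_top"
      apply (rule barbalat[where g="\<lambda>t. V1 (x t)" and g'="\<lambda>t. DV1 (x t) \<bullet> f (x t)" and B=B1])
      using chain_V[OF sol V1_deriv] dV1 N1_nonneg unif1[OF sol] B1 by auto
    obtain B2 where B2: "\<forall>t\<ge>0. B2 \<le> V2 (x t)" using lbV[OF contV[OF V2_deriv] sol] by blast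
    define W where "W = (\<lambda>t. V2 (x t) + c * V1 (x t))"
    have "(W has_derivative (\<lambda>h. h * (DV2 (x t) \<bullet> f (x t) + c * (DV1 (x t) \<bullet> f (x t))))) (at t within {0..})"
      if "t \<ge> 0" for t
      unfolding W_def
      using has_derivative_add[OF chain_V[OF sol V2_deriv that] has_derivative_scaleR_right[OF chain_V[OF sol V1_deriv that], of c]]
      by (simp add: algebra_simps)
    moreover have "DV2 (x t) \<bullet> f (x t) + c * (DV1 (x t) \<bullet> f (x t)) \<le> - N2 (x t)" for t
    proof -
      have "c * (DV1 (x t) \<bullet> f (x t)) \<le> c * (- N1 (x t))" using dV1 c0 by (intro mult_left_mono) auto
      then show ?thesis using dV2[of "x t"] hc[OF N1_nonneg[of "x t"]] by linarith
    qed
    moreover have "\<forall>t\<ge>0. B2 + c * B1 \<le> W t"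
      unfolding W_def using B1 B2 c0 by (smt (verit) mult_left_mono)
    ultimately have N2lim: "((\<lambda>t. N2 (x t)) \<longlongrightarrow> 0) at_top"
      using N2_nonneg unif2[OF sol]
      by (intro barbalat[where g=W and B="B2 + c * B1"]) auto
    have "bounded (range (\<lambda>k::nat. x (real k)))"
      using bounded_sol[OF sol] by (rule bounded_subset) auto
    then obtain p r where pr: "strict_mono r" "((\<lambda>k. x (real k)) \<circ> r) \<longlonglongrightarrow> p"
      using bounded_imp_convergent_subsequence by blast
    define s where "s = (\<lambda>k. real (r k))"
    have s_top: "filterlim s at_top sequentially"
      unfolding s_def using filterlim_compose[OF filterlim_real_sequentially filterlim_subseq[OF pr(1)]]
      by (simp add: o_def)
    have xs: "(\<lambda>k. x (s k)) \<longlonglongrightarrow> p" using pr(2) by (simp add: s_def o_def)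
    have s0: "\<forall>k. s k \<ge> 0" unfolding s_def by simp
    have "(\<lambda>k. N1 (x (s k))) \<longlonglongrightarrow> N1 p"
      using N1_cont xs by (intro isCont_tendsto_compose[where g=N1]) (auto simp: continuous_on_eq_continuous_at)
    moreover have "(\<lambda>k. N1 (x (s k))) \<longlonglongrightarrow> 0"
      using filterlim_compose[OF N1lim s_top] by (simp add: o_def)
    ultimately have p1: "N1 p = 0" using LIMSEQ_unique by blast
    have "(\<lambda>k. N2 (x (s k))) \<longlonglongrightarrow> N2 p"
      using N2_cont xs by (intro isCont_tendsto_compose[where g=N2]) (auto simp: continuous_on_eq_continuous_at)
    moreover have "(\<lambda>k. N2 (x (s k))) \<longlonglongrightarrow> 0"
      using filterlim_compose[OF N2lim s_top] by (simp add: o_def)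
    ultimately have p2: "N2 p = 0" using LIMSEQ_unique by blast
    have peq: "p \<in> equilibria f" using E_eq p1 p2 by blast
    have xp: "(x \<longlongrightarrow> p) at_top"
      unfolding tendsto_def
    proof (intro allI impI)
      fix U assume U: "open U" "p \<in> U"
      obtain V where V: "open V" "p \<in> V" "V \<subseteq> U"
        "\<forall>y. is_solution f y \<and> y 0 \<in> V \<longrightarrow> (\<forall>t\<ge>0. y t \<in> U)"
        using all_stable[OF peq] U unfolding lyapunov_stable_def by blast
      have "eventually (\<lambda>k. x (s k) \<in> V) sequentially"
        using xs V(1,2) unfolding tendsto_def by blast
      then obtain k where k: "x (s k) \<in> V" by (meson eventually_sequentially order_refl)
      have "is_solution f (\<lambda>t. x (t + s k))" using shift_sol[OF sol] s0 by blast
      then have "\<forall>t\<ge>0. x (t + s k) \<in> U" using V(4) k by auto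
      then have "\<forall>t\<ge>s k. x t \<in> U"
        by (metis diff_add_cancel diff_ge_0_iff_ge)
      then show "eventually (\<lambda>t. x t \<in> U) at_top"
        unfolding eventually_at_top_linorder by blast
    qed
    have "omega_limit x = {p}"
    proof
      show "omega_limit x \<subseteq> {p}"
      proof
        fix q assume "q \<in> omega_limit x"
        then obtain s' where s': "filterlim s' at_top sequentially" "(\<lambda>k. x (s' k)) \<longlonglongrightarrow> q"
          unfolding omega_limit_def by blast
        have "(\<lambda>k. x (s' k)) \<longlonglongrightarrow> p" using filterlim_compose[OF xp s'(1)] by (simp add: o_def)
        then show "q \<in> {p}" using s'(2) LIMSEQ_unique by auto
      qed
      show "{p} \<subseteq> omega_limit x"
        unfolding omega_limit_def using s_top s0 xs by blast
    qed
    then show ?thesis using xp p1 p2 by blast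
  qed
  show ?thesis
  proof (intro conjI ballI allI impI)
    fix x assume "is_solution f x"
    then show "\<exists>e \<in> {z. N1 z = 0 \<and> N2 z = 0}. (x \<longlongrightarrow> e) at_top \<and> omega_limit x = {e}"
      by (rule conv)
  next
    fix z assume z: "z \<in> equilibria f"
    show "semistable f z"
      unfolding semistable_def
    proof (intro conjI)
      show "z \<in> equilibria f" by (rule z)
      show "lyapunov_stable f z" using all_stable[OF z] .
      show "\<exists>\<delta>>0. \<forall>x. is_solution f x \<and> norm (x 0 - z) \<le> \<delta> \<longrightarrow>
        (\<exists>e \<in> equilibria f. lyapunov_stable f e \<and> (x \<longlongrightarrow> e) at_top)"
      proof (intro exI[of _ 1] conjI allI impI)
        fix x assume "is_solution f x \<and> norm (x 0 - z) \<le> 1"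
        then obtain e where e: "e \<in> {z. N1 z = 0 \<and> N2 z = 0}" "(x \<longlongrightarrow> e) at_top"
          using conv by blast
        then have "e \<in> equilibria f" using E_eq by simp
        then show "\<exists>e \<in> equilibria f. lyapunov_stable f e \<and> (x \<longlongrightarrow> e) at_top"
          using e(2) all_stable by blast
      qed simp
    qed
  qed
qed

end
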